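(* Let $n\ge3$, $p\ge\frac{n+2}{n-2}$, $1\le q<\frac n{n-2}$, and set $\tau=p(n-2)-(n+2)$ and $\alpha=n-q(n-2)$. Let $v\in C^2(H)\cap C^1(\overline H\setminus\{0\})$ satisfy $$\Delta v=|x|^\tau v^p,\quad v>0\ \text{ in } H,\qquad \frac{\partial v}{\partial t}=-\frac{1}{|x|^\alpha}v^q\ \text{ on } \partial H\setminus\{0\}.$$ Then for any $\epsilon$ with $0<\epsilon<\min\{1,\ \min_{\partial B_1^+\cap\partial B_1} v\}$, we have $v(x)\ge \epsilon/2$ for all $x\in\overline{B_1^+}\setminus\{0\}$.
   Context: $H=\{(x',t): x'\in\mathbb{R}^{n-1}, t>0\}$, $\partial H=\{t=0\}$. $B_R=\{x\in\mathbb{R}^n:|x|<R\}$ and $B_R^+=\{x\in H:|x|<R\}$. $\partial v/\partial t$ on $\partial H$ is the derivative in the last variable $t$. *)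

theory Defs
  imports "HOL-Analysis.Analysis"
begin

text \<open>Points of R^n are written (x', t) with x' in an abstract Euclidean space 'a
  of dimension n-1 and t the last coordinate.\<close>

definition upper_half :: "('a::euclidean_space \<times> real) set" where
  "upper_half = {x. snd x > 0}"

definition closed_upper_half :: "('a::euclidean_space \<times> real) set" where
  "closed_upper_half = {x. snd x \<ge> 0}"

definition has_pd :: "('b::real_normed_vector \<Rightarrow> real) \<Rightarrow> 'b \<Rightarrow> 'b \<Rightarrow> bool" where
  "has_pd v e x \<longleftrightarrow> (\<lambda>s. v (x + s *\<^sub>R e)) differentiable (at 0)"

definition pd :: "('b::real_normed_vector \<Rightarrow> real) \<Rightarrow> 'b \<Rightarrow> 'b \<Rightarrow> real" where
  "pd v e x = deriv (\<lambda>s. v (x + s *\<^sub>R e)) 0"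

definition C2_on :: "'b::euclidean_space set \<Rightarrow> ('b \<Rightarrow> real) \<Rightarrow> bool" where
  "C2_on S v \<longleftrightarrow> continuous_on S v \<and>
     (\<forall>e\<in>Basis. (\<forall>x\<in>S. has_pd v e x) \<and> continuous_on S (pd v e) \<and>
        (\<forall>e'\<in>Basis. (\<forall>x\<in>S. has_pd (pd v e) e' x) \<and> continuous_on S (pd (pd v e) e')))"

definition C1_upto :: "'b::euclidean_space set \<Rightarrow> ('b \<Rightarrow> real) \<Rightarrow> bool" where
  "C1_upto T v \<longleftrightarrow> continuous_on T v \<and>
     (\<forall>e\<in>Basis. \<exists>g. continuous_on T g \<and>
        (\<forall>x\<in>interior T. has_pd v e x \<and> pd v e x = g x))"

definition laplacian :: "('b::euclidean_space \<Rightarrow> real) \<Rightarrow> 'b \<Rightarrow> real" where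
  "laplacian v x = (\<Sum>e\<in>Basis. pd (pd v e) e x)"

end

theory Submission
  imports Defs
begin

lemma second_deriv_min:
  fixes f f' :: "real \<Rightarrow> real"
  assumes d: "\<forall>\<^sub>F s in nhds 0. (f has_real_derivative f' s) (at s)"
    and d2: "(f' has_real_derivative L) (at 0)"
    and mn: "\<forall>\<^sub>F s in nhds 0. f 0 \<le> f s"
  shows "0 \<le> L"
proof (rule ccontr)
  assume L: "\<not> 0 \<le> L"
  from eventually_conj[OF d mn] obtain d1 where d1: "d1 > 0"
    and H: "\<And>s. \<bar>s\<bar> < d1 \<Longrightarrow> (f has_real_derivative f' s) (at s) \<and> f 0 \<le> f s"
    unfolding eventually_nhds_metric dist_real_def by force
  have f0: "f' 0 = 0"
  proof -
    have a: "(f has_real_derivative f' 0) (at 0)" using H[of 0] d1 by auto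
    have b: "\<forall>y. \<bar>0 - y\<bar> < d1 \<longrightarrow> f 0 \<le> f y" using H by auto
    show ?thesis using DERIV_local_min[OF a d1 b] .
  qed
  have "((\<lambda>y. (f' y - f' 0) / (y - 0)) \<longlongrightarrow> L) (at 0)"
    using d2 by (simp add: has_field_derivative_iff)
  hence "((\<lambda>y. (f' y - f' 0) / (y - 0)) \<longlongrightarrow> L) (at_right 0)"
    by (rule filterlim_mono) (auto simp: at_le)
  hence "\<forall>\<^sub>F y in at_right 0. (f' y - f' 0) / (y - 0) < 0"
    using L order_tendstoD(2) by (metis not_le)
  then obtain b where b: "b > 0" and B: "\<And>y. 0 < y \<Longrightarrow> y < b \<Longrightarrow> f' y / y < 0"
    unfolding eventually_at_right_field using f0 by auto
  define s where "s = min b d1 / 2"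
  have s: "0 < s" "s < b" "s < d1" using b d1 by (auto simp: s_def)
  have "\<exists>z. 0 < z \<and> z < s \<and> f s - f 0 = (s - 0) * f' z"
    by (rule MVT2) (use s H in auto)
  then obtain z where z: "0 < z" "z < s" "f s - f 0 = s * f' z" by auto
  have "f' z / z < 0" using B[of z] z s by auto
  hence "f' z < 0" using z by (simp add: divide_less_0_iff)
  hence "s * f' z < 0" using s by (simp add: mult_pos_neg)
  hence "f s < f 0" using z by linarith
  moreover have "f 0 \<le> f s" using H[of s] s by auto
  ultimately show False by simp
qed
lemma h_deriv:
  fixes a b A B D E k u :: real
  assumes "a + 2*b*u + u^2 > 0"
  shows "((\<lambda>u. A + B*(a+2*b*u+u^2) - D*(a+2*b*u+u^2) powr k + E*u) has_real_derivative
     (B*(2*b+2*u) - D*(k*(a+2*b*u+u^2) powr (k-1)*(2*b+2*u)) + E)) (at u)"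
proof -
  have P: "((\<lambda>u. a+2*b*u+u^2) has_real_derivative (2*b+2*u)) (at u)"
    by (auto intro!: derivative_eq_intros)
  have Q: "((\<lambda>u. (a+2*b*u+u^2) powr k) has_real_derivative (k*(a+2*b*u+u^2) powr (k-1)*(2*b+2*u))) (at u)"
    using DERIV_fun_powr[OF P assms] by simp
  show ?thesis
    using DERIV_add[OF DERIV_diff[OF DERIV_add[OF DERIV_const DERIV_cmult[OF P, where c=B]] DERIV_cmult[OF Q, where c=D]] DERIV_cmult[OF DERIV_ident, where c=E]] by simp
qed

lemma h_deriv2:
  fixes a b B D E k :: real
  assumes "a > 0"
  shows "((\<lambda>u. B*(2*b+2*u) - D*(k*(a+2*b*u+u^2) powr (k-1)*(2*b+2*u)) + E) has_real_derivative
     (2*B - D*(k*((k-1)*a powr (k-2)*(2*b))*(2*b) + k*a powr (k-1)*2))) (at 0)"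
proof -
  have P: "((\<lambda>u. a+2*b*u+u^2) has_real_derivative (2*b+2*0)) (at 0)"
    by (auto intro!: derivative_eq_intros)
  have Q: "((\<lambda>u. (a+2*b*u+u^2) powr (k-1)) has_real_derivative ((k-1)*(a+2*b*0+0^2) powr (k-1-1)*(2*b+2*0))) (at 0)"
    using DERIV_fun_powr[OF P, of "k-1"] assms by simp
  have Q': "((\<lambda>u. (a+2*b*u+u^2) powr (k-1)) has_real_derivative ((k-1)*a powr (k-2)*(2*b))) (at 0)"
    using Q by (simp add: algebra_simps diff_diff_eq)
  have R: "((\<lambda>u. 2*b+2*u) has_real_derivative 2) (at 0)"
    by (auto intro!: derivative_eq_intros)
  have S: "((\<lambda>u. k*(a+2*b*u+u^2) powr (k-1)*(2*b+2*u)) has_real_derivative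
      (k*((k-1)*a powr (k-2)*(2*b))*(2*b) + k*a powr (k-1)*2)) (at 0)"
    using DERIV_mult[OF DERIV_cmult[OF Q', where c=k] R] by (simp add: algebra_simps)
  show ?thesis
    using DERIV_add[OF DERIV_diff[OF DERIV_cmult[OF R, where c=B] DERIV_cmult[OF S, where c=D]] DERIV_const]
    by (simp add: algebra_simps)
qed

lemma pd_line_deriv:
  fixes v :: "'b::euclidean_space \<Rightarrow> real"
  assumes "has_pd v e (x0 + s *\<^sub>R e)"
  shows "((\<lambda>s. v (x0 + s *\<^sub>R e)) has_real_derivative pd v e (x0 + s *\<^sub>R e)) (at s)"
proof -
  have "((\<lambda>r. v ((x0 + s *\<^sub>R e) + r *\<^sub>R e)) has_real_derivative pd v e (x0 + s *\<^sub>R e)) (at 0)"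
    using assms unfolding has_pd_def pd_def by (simp add: DERIV_deriv_iff_real_differentiable)
  moreover have "(\<lambda>r. v ((x0 + s *\<^sub>R e) + r *\<^sub>R e)) = (\<lambda>r. v (x0 + (r + s) *\<^sub>R e))"
    by (simp add: scaleR_add_left algebra_simps)
  ultimately have "((\<lambda>r. (\<lambda>s. v (x0 + s *\<^sub>R e)) (r + s)) has_real_derivative pd v e (x0 + s *\<^sub>R e)) (at 0)"
    by simp
  thus ?thesis using DERIV_shift[of "\<lambda>s. v (x0 + s *\<^sub>R e)" _ 0 s] by simp
qed

lemma lap_ge:
  fixes v \<psi> :: "'b::euclidean_space \<Rightarrow> real"
  assumes U: "open U" "x0 \<in> U"
    and mn: "\<And>x. x \<in> U \<Longrightarrow> v x0 - \<psi> x0 \<le> v x - \<psi> x"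
    and pd1: "\<And>x e. x \<in> U \<Longrightarrow> e \<in> Basis \<Longrightarrow> has_pd v e x"
    and pd2: "\<And>e. e \<in> Basis \<Longrightarrow> has_pd (pd v e) e x0"
    and h1: "\<And>e. e \<in> Basis \<Longrightarrow> \<forall>\<^sub>F s in nhds 0. ((\<lambda>s. \<psi> (x0 + s *\<^sub>R e)) has_real_derivative h' e s) (at s)"
    and h2: "\<And>e. e \<in> Basis \<Longrightarrow> (h' e has_real_derivative h2 e) (at 0)"
  shows "(\<Sum>e\<in>Basis. h2 e) \<le> laplacian v x0"
  unfolding laplacian_def
proof (rule sum_mono)
  fix e :: 'b assume e: "e \<in> Basis"
  have cont: "((\<lambda>s. x0 + s *\<^sub>R e) \<longlongrightarrow> x0) (nhds 0)"
    using tendsto_at_iff_tendsto_nhds[of "\<lambda>s. x0 + s *\<^sub>R e" 0, symmetric]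
    by (auto intro!: tendsto_eq_intros)
  have evU: "\<forall>\<^sub>F s in nhds 0. x0 + s *\<^sub>R e \<in> U"
    using cont U unfolding tendsto_def by auto
  have D2: "((\<lambda>s. pd v e (x0 + s *\<^sub>R e)) has_real_derivative pd (pd v e) e x0) (at 0)"
    using pd2[OF e] unfolding has_pd_def pd_def[of "pd v e"]
    by (simp add: DERIV_deriv_iff_real_differentiable)
  have "0 \<le> pd (pd v e) e x0 - h2 e"
  proof (rule second_deriv_min[where f="\<lambda>s. v (x0 + s *\<^sub>R e) - \<psi> (x0 + s *\<^sub>R e)"
        and f'="\<lambda>s. pd v e (x0 + s *\<^sub>R e) - h' e s"])
    show "\<forall>\<^sub>F s in nhds 0. ((\<lambda>s. v (x0 + s *\<^sub>R e) - \<psi> (x0 + s *\<^sub>R e)) has_real_derivative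
        pd v e (x0 + s *\<^sub>R e) - h' e s) (at s)"
      using evU h1[OF e]
    proof eventually_elim
      case (elim s)
      show ?case
        by (rule DERIV_diff[OF pd_line_deriv[OF pd1[OF elim(1) e]] elim(2)])
    qed
    show "((\<lambda>s. pd v e (x0 + s *\<^sub>R e) - h' e s) has_real_derivative pd (pd v e) e x0 - h2 e) (at 0)"
      by (rule DERIV_diff[OF D2 h2[OF e]])
    show "\<forall>\<^sub>F s in nhds 0. v (x0 + 0 *\<^sub>R e) - \<psi> (x0 + 0 *\<^sub>R e) \<le> v (x0 + s *\<^sub>R e) - \<psi> (x0 + s *\<^sub>R e)"
      using evU by eventually_elim (use mn in auto)
  qed
  thus "h2 e \<le> pd (pd v e) e x0" by simp
qed


lemma psi_sum:
  fixes x0 :: "'b::euclidean_space" and B D k :: real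
  assumes a: "x0 \<bullet> x0 > 0" and k: "k = (2 - real DIM('b)) / 2"
  shows "(\<Sum>e\<in>Basis. 2*B - D*(k*((k-1)*(x0\<bullet>x0) powr (k-2)*(2*(x0\<bullet>e)))*(2*(x0\<bullet>e))
            + k*(x0\<bullet>x0) powr (k-1)*2)) = 2*B*DIM('b)"
proof -
  let ?a = "x0 \<bullet> x0"
  have sq: "(\<Sum>e\<in>(Basis::'b set). (x0\<bullet>e)^2) = ?a"
    by (simp add: euclidean_inner[of x0 x0] power2_eq_square)
  have pw: "?a powr (k-2) * ?a = ?a powr (k-1)"
    using a by (simp add: powr_diff powr_add[symmetric] field_simps powr_minus power2_eq_square)
  have "(\<Sum>e\<in>Basis. 2*B - D*(k*((k-1)*?a powr (k-2)*(2*(x0\<bullet>e)))*(2*(x0\<bullet>e))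
            + k*?a powr (k-1)*2)) =
        (\<Sum>e\<in>(Basis::'b set). (2*B - D*k*?a powr (k-1)*2) - (D*4*k*(k-1)*?a powr (k-2)) * (x0\<bullet>e)^2)"
    by (rule sum.cong) (auto simp: algebra_simps power2_eq_square)
  also have "\<dots> = DIM('b) * (2*B - D*k*?a powr (k-1)*2) - (D*4*k*(k-1)*?a powr (k-2)) * ?a"
    by (simp add: sum_subtractf sum_distrib_left[symmetric] sq)
  also have "\<dots> = DIM('b) * (2*B - D*k*?a powr (k-1)*2) - (D*4*k*(k-1)) * ?a powr (k-1)"
    using pw by (simp add: mult.assoc)
  also have "\<dots> = 2*B*DIM('b) - D*k*?a powr (k-1)*2 * (DIM('b) + 2*k - 2)"
    by (simp add: algebra_simps)
  also have "DIM('b) + 2*k - 2 = 0" using k by simp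
  finally show ?thesis by simp
qed


theorem lemma2p1:
  fixes v :: "('a::euclidean_space \<times> real) \<Rightarrow> real"
    and p q \<epsilon> :: real
  defines "n \<equiv> real (DIM('a)) + 1"
  assumes n3: "DIM('a) \<ge> 2"
    and hp: "p \<ge> (n + 2) / (n - 2)"
    and hq: "1 \<le> q" "q < n / (n - 2)"
    and C2: "C2_on upper_half v"
    and C1: "C1_upto (closed_upper_half - {0}) v"
    and eq: "\<And>x. x \<in> upper_half \<Longrightarrow>
               laplacian v x = norm x powr (p * (n - 2) - (n + 2)) * v x powr p"
    and pos: "\<And>x. x \<in> upper_half \<Longrightarrow> v x > 0"
    and bdry: "\<And>y. y \<noteq> 0 \<Longrightarrow>
               ((\<lambda>t. v (y, t)) has_real_derivative
                  (- (1 / norm (y, 0::real) powr (n - q * (n - 2))) * v (y, 0) powr q))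
               (at_right 0)"
    and eps: "0 < \<epsilon>" "\<epsilon> < 1"
             "\<epsilon> < (INF x\<in>{x. norm x = 1 \<and> snd x \<ge> 0}. v x)"
  shows "\<forall>x. snd x \<ge> 0 \<and> norm x \<le> 1 \<and> x \<noteq> 0 \<longrightarrow> v x \<ge> \<epsilon> / 2"
proof (intro allI impI)
  fix z :: "'a \<times> real"
  assume z: "snd z \<ge> 0 \<and> norm z \<le> 1 \<and> z \<noteq> 0"
  show "v z \<ge> \<epsilon> / 2"
  proof (rule ccontr)
    assume vz: "\<not> v z \<ge> \<epsilon> / 2"
    have n3': "n \<ge> 3" using n3 by (simp add: n_def)
    have dimn: "real DIM('a \<times> real) = n" by (simp add: n_def)
    have p1: "p * (n - 2) \<ge> n + 2" using hp n3' by (simp add: pos_divide_le_eq)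
    have tau: "p * (n - 2) - (n + 2) \<ge> 0" using p1 by simp
    have pge1: "p \<ge> 1"
    proof -
      have "(n + 2) / (n - 2) \<ge> 1" using n3' by simp
      thus ?thesis using hp by linarith
    qed
    define k where "k = (2 - n) / 2"
    define B where "B = \<epsilon> / (2 * n)"
    define \<eta> where "\<eta> = \<epsilon> / 6"
    define \<delta> where "\<delta> = \<epsilon> / 6 * norm z powr (n - 2)"
    define r where "r = norm z / 6"
    define \<psi> where "\<psi> = (\<lambda>x::'a\<times>real. (\<epsilon> - B - \<eta>) + B * (x \<bullet> x) - \<delta> * (x \<bullet> x) powr k + \<eta> * snd x)"
    define w where "w = (\<lambda>x. v x - \<psi> x)"
    define K where "K = {x::'a\<times>real. 0 \<le> snd x \<and> r \<le> norm x \<and> norm x \<le> 1}"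
    have nz: "norm z > 0" using z by simp
    have r0: "r > 0" "r < 1" using nz z by (auto simp: r_def)
    have B0: "0 \<le> B" "B \<le> \<epsilon> / 6" using eps n3' by (auto simp: B_def field_simps)
    have d0: "\<delta> \<ge> 0" using eps by (simp add: \<delta>_def)
    have sndle: "snd x \<le> norm x" for x :: "'a \<times> real"
      using norm_snd_le[of "snd x" "fst x"] by simp
    have ipow: "(x \<bullet> x) powr k = norm x powr (2 - n)" if "x \<noteq> 0" for x :: "'a \<times> real"
    proof -
      have "x \<bullet> x = norm x powr 2" using that by (simp add: power2_norm_eq_inner[symmetric] powr_numeral)
      hence "(x \<bullet> x) powr k = (norm x powr 2) powr k" by (simp only:)
      also have "\<dots> = norm x powr (2 * k)" by (rule powr_powr)
      finally have "(x \<bullet> x) powr k = norm x powr (2 * k)" .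
      moreover have "2 * k = 2 - n" by (simp add: k_def)
      ultimately show ?thesis by simp
    qed
    have psi_le: "\<psi> x \<le> \<epsilon>" if "norm x \<le> 1" for x :: "'a \<times> real"
    proof -
      have "x \<bullet> x \<le> 1" using that by (simp add: power2_norm_eq_inner[symmetric] power_le_one)
      hence "B * (x \<bullet> x) \<le> B" using B0 by (simp add: mult_left_le)
      moreover have "\<eta> * snd x \<le> \<eta>" using sndle[of x] that eps by (simp add: \<eta>_def)
      moreover have "\<delta> * (x \<bullet> x) powr k \<ge> 0" using d0 by simp
      ultimately show ?thesis by (simp add: \<psi>_def)
    qed
    have psi_z: "\<psi> z \<ge> \<epsilon> / 2"
    proof -
      have "\<delta> * (z \<bullet> z) powr k = \<epsilon> / 6 * (norm z powr (n - 2) * norm z powr (2 - n))"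
        using z by (simp add: ipow \<delta>_def)
      also have "\<dots> = \<epsilon> / 6" using nz by (simp add: powr_add[symmetric])
      finally have a: "\<delta> * (z \<bullet> z) powr k = \<epsilon> / 6" .
      have b: "B * (z \<bullet> z) \<ge> 0" using B0 by simp
      have c: "\<eta> * snd z \<ge> 0" using z eps by (simp add: \<eta>_def)
      have "\<psi> z = (\<epsilon> - B - \<eta>) + B * (z \<bullet> z) - \<delta> * (z \<bullet> z) powr k + \<eta> * snd z"
        by (simp add: \<psi>_def)
      thus ?thesis using a b c B0 eps(1) unfolding \<eta>_def by linarith
    qed
    have wz: "w z < 0" using vz psi_z by (simp add: w_def)
    have zK: "z \<in> K" using z nz by (simp add: K_def r_def)
    have K0: "\<And>x. x \<in> K \<Longrightarrow> x \<bullet> x > 0"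
      using r0 by (auto simp: K_def)
    have compK: "compact K"
    proof -
      have "closed K" unfolding K_def
        by (intro closed_Collect_conj closed_Collect_le continuous_intros)
      moreover have "bounded K" by (rule bounded_subset[of "cball 0 1"]) (auto simp: K_def)
      ultimately show ?thesis by (simp add: compact_eq_bounded_closed)
    qed
    have vcont: "continuous_on (closed_upper_half - {0}) v" using C1 by (simp add: C1_upto_def)
    have "K \<subseteq> closed_upper_half - {0}" using r0 by (auto simp: K_def closed_upper_half_def)
    hence vK: "continuous_on K v" using vcont continuous_on_subset by blast
    have psiK: "continuous_on K \<psi>"
    proof -
      have K0': "\<forall>x\<in>K. x \<bullet> x \<noteq> 0" using K0 by force
      show ?thesis unfolding \<psi>_def by (intro continuous_intros K0')
    qed
    have wK: "continuous_on K w" unfolding w_def by (intro continuous_intros vK psiK)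
    obtain x0 where x0K: "x0 \<in> K" and x0min: "\<And>y. y \<in> K \<Longrightarrow> w x0 \<le> w y"
      using continuous_attains_inf[OF compK _ wK] zK by blast
    have wx0: "w x0 < 0" using x0min[OF zK] wz by simp
    hence vpsi: "v x0 < \<psi> x0" by (simp add: w_def)
    define S1 where "S1 = {x::'a\<times>real. norm x = 1 \<and> snd x \<ge> 0}"
    have sphere: "\<epsilon> < v x" if "x \<in> S1" for x
    proof -
      have "closed S1" unfolding S1_def
        by (intro closed_Collect_conj closed_Collect_eq closed_Collect_le continuous_intros)
      moreover have "bounded S1" by (rule bounded_subset[of "cball 0 1"]) (auto simp: S1_def)
      ultimately have cS: "compact S1" by (simp add: compact_eq_bounded_closed)
      have "S1 \<subseteq> closed_upper_half - {0}" by (auto simp: S1_def closed_upper_half_def)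
      hence "continuous_on S1 v" using vcont continuous_on_subset by blast
      hence "compact (v ` S1)" using cS compact_continuous_image by blast
      hence "bdd_below (v ` S1)" by (simp add: bounded_imp_bdd_below compact_imp_bounded)
      hence "(INF x\<in>S1. v x) \<le> v x" using that by (rule cINF_lower)
      thus ?thesis using eps(3) by (simp add: S1_def)
    qed
    have x0n: "r \<le> norm x0" "norm x0 \<le> 1" "0 \<le> snd x0" using x0K by (auto simp: K_def)
    have x0nz: "x0 \<noteq> 0" using x0n r0 by auto
    show False
    proof (cases "norm x0 = 1")
      case True
      hence "x0 \<in> S1" using x0n by (simp add: S1_def)
      hence "\<epsilon> < v x0" by (rule sphere)
      thus False using vpsi psi_le[of x0] x0n by simp
    next
      case nx1: False
      hence nx1: "norm x0 < 1" using x0n by simp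
      show False
      proof (cases "snd x0 = 0")
        case True
        define y where "y = fst x0"
        have x0y: "x0 = (y, 0)" using True by (simp add: y_def prod_eq_iff)
        have y0: "y \<noteq> 0" using x0nz x0y by (auto simp: zero_prod_def)
        have ay: "y \<bullet> y > 0" using y0 by simp
        define Dv where "Dv = - (1 / norm (y, 0::real) powr (n - q * (n - 2))) * v (y, 0) powr q"
        have Dv0: "Dv \<le> 0" unfolding Dv_def by (simp add: mult_nonneg_nonneg)
        have hv: "((\<lambda>t. v (y, t)) has_real_derivative Dv) (at_right 0)"
          using bdry[OF y0] by (simp add: Dv_def)
        have psiyt: "\<psi> (y, t) = (\<epsilon> - B - \<eta>) + B * (y \<bullet> y + 2*0*t + t^2)
              - \<delta> * (y \<bullet> y + 2*0*t + t^2) powr k + \<eta> * t" for t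
          by (simp add: \<psi>_def power2_eq_square)
        have hp0: "((\<lambda>t. \<psi> (y, t)) has_real_derivative \<eta>) (at 0)"
          using h_deriv[of "y \<bullet> y" 0 0 "\<epsilon> - B - \<eta>" B \<delta> k \<eta>] ay
          by (simp add: psiyt)
        have hf: "((\<lambda>t. w (y, t)) has_real_derivative Dv - \<eta>) (at_right 0)"
          unfolding w_def by (rule DERIV_diff[OF hv has_field_derivative_at_within[OF hp0]])
        have "((\<lambda>t. (w (y, t) - w (y, 0)) / (t - 0)) \<longlongrightarrow> Dv - \<eta>) (at_right 0)"
          using hf by (simp add: has_field_derivative_iff)
        moreover have "Dv - \<eta> < 0" using Dv0 eps by (simp add: \<eta>_def)
        ultimately have ev1: "\<forall>\<^sub>F t in at_right 0. (w (y, t) - w (y, 0)) / (t - 0) < 0"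
          using order_tendstoD(2) by blast
        have tn: "((\<lambda>t::real. norm (y, t)) \<longlongrightarrow> norm (y, 0::real)) (at_right 0)"
          by (intro tendsto_norm tendsto_Pair tendsto_const tendsto_ident_at)
        have ev2: "\<forall>\<^sub>F t in at_right 0. norm (y, t::real) < 1"
          using order_tendstoD(2)[OF tn, of 1] nx1 x0y by simp
        from eventually_conj[OF ev1 ev2] obtain b where b: "b > 0"
          and bb: "\<And>t. 0 < t \<Longrightarrow> t < b \<Longrightarrow> (w (y, t) - w (y, 0)) / (t - 0) < 0 \<and> norm (y, t) < 1"
          unfolding eventually_at_right_field by auto
        define t where "t = b / 2"
        have t: "0 < t" "t < b" using b by (auto simp: t_def)
        have wt: "w (y, t) < w (y, 0)" using bb[OF t] t by (simp add: divide_less_0_iff)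
        have "norm (y, 0::real) \<le> norm (y, t)" by (simp add: norm_Pair)
        hence "(y, t) \<in> K" using bb[OF t] t x0n x0y by (auto simp: K_def)
        hence "w x0 \<le> w (y, t)" by (rule x0min)
        thus False using wt x0y by simp
      next
        case False
        hence sx0: "snd x0 > 0" using x0n by simp
        show False
        proof (cases "norm x0 = r")
          case True
          have "x0 \<in> upper_half" using sx0 by (simp add: upper_half_def)
          hence vp: "v x0 > 0" by (rule pos)
          have "\<delta> * (x0 \<bullet> x0) powr k = \<epsilon> / 6 * (norm z powr (n - 2) * (norm z / 6) powr (2 - n))"
          proof -
            have "(x0 \<bullet> x0) powr k = r powr (2 - n)" using ipow[OF x0nz] True by simp
            thus ?thesis by (simp add: \<delta>_def r_def)
          qed
          also have "\<dots> = \<epsilon> / 6 * 6 powr (n - 2)"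
            using nz by (simp add: powr_divide powr_add[symmetric] powr_minus divide_simps)
          finally have d1: "\<delta> * (x0 \<bullet> x0) powr k = \<epsilon> / 6 * 6 powr (n - 2)" .
          have "6 powr 1 \<le> 6 powr (n - 2)" using n3' by (intro powr_mono) auto
          hence "\<epsilon> \<le> \<epsilon> / 6 * 6 powr (n - 2)" using eps by simp
          hence d2: "\<epsilon> \<le> \<delta> * (x0 \<bullet> x0) powr k" using d1 by simp
          have "x0 \<bullet> x0 \<le> 1" using x0n by (simp add: power2_norm_eq_inner[symmetric] power_le_one)
          hence b1: "B * (x0 \<bullet> x0) \<le> B" using B0 by (simp add: mult_left_le)
          have b2: "\<eta> * snd x0 \<le> \<eta>" using sndle[of x0] x0n eps by (simp add: \<eta>_def)
          have "\<psi> x0 = (\<epsilon> - B - \<eta>) + B * (x0 \<bullet> x0) - \<delta> * (x0 \<bullet> x0) powr k + \<eta> * snd x0"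
            by (simp add: \<psi>_def)
          hence "\<psi> x0 \<le> 0" using d2 b1 b2 by linarith
          thus False using vp vpsi by simp
        next
          case False
          hence xr: "r < norm x0" using x0n by simp
          define U where "U = {x::'a\<times>real. 0 < snd x \<and> r < norm x \<and> norm x < 1}"
          have oU: "open U" unfolding U_def
            by (intro open_Collect_conj open_Collect_less continuous_intros)
          have x0U: "x0 \<in> U" using sx0 xr nx1 by (simp add: U_def)
          have UK: "U \<subseteq> K" by (auto simp: U_def K_def)
          have Uh: "U \<subseteq> upper_half" by (auto simp: U_def upper_half_def)
          have C2': "\<forall>e\<in>Basis. (\<forall>x\<in>upper_half. has_pd v e x) \<and> (\<forall>x\<in>upper_half. has_pd (pd v e) e x)"
            using C2 by (simp add: C2_on_def)
          define a where "a = x0 \<bullet> x0"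
          have a0: "a > 0" using x0nz by (simp add: a_def)
          define h' where "h' = (\<lambda>(e::'a\<times>real) s. B*(2*(x0\<bullet>e)+2* s)
               - \<delta>*(k*(a+2*(x0\<bullet>e)* s+s^2) powr (k-1)*(2*(x0\<bullet>e)+2* s)) + \<eta> * snd e)"
          define h2 where "h2 = (\<lambda>(e::'a\<times>real). 2*B - \<delta>*(k*((k-1)*a powr (k-2)*(2*(x0\<bullet>e)))*(2*(x0\<bullet>e))
               + k*a powr (k-1)*2))"
          have lap: "(\<Sum>e\<in>Basis. h2 e) \<le> laplacian v x0"
          proof (rule lap_ge[OF oU x0U])
            show "\<And>x. x \<in> U \<Longrightarrow> v x0 - \<psi> x0 \<le> v x - \<psi> x"
              using x0min UK unfolding w_def by blast
            show "\<And>x e. x \<in> U \<Longrightarrow> e \<in> Basis \<Longrightarrow> has_pd v e x" using C2' Uh by blast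
            show "\<And>e. e \<in> Basis \<Longrightarrow> has_pd (pd v e) e x0" using C2' Uh x0U by blast
          next
            fix e :: "'a \<times> real" assume e: "e \<in> Basis"
            have ee: "e \<bullet> e = 1" using e by simp
            define b where "b = x0 \<bullet> e"
            have psil: "\<psi> (x0 + s *\<^sub>R e) = (\<epsilon> - B - \<eta> + \<eta> * snd x0) + B*(a+2*b* s+s^2)
                 - \<delta>*(a+2*b* s+s^2) powr k + (\<eta>* snd e)* s" for s
            proof -
              have "(x0 + s *\<^sub>R e) \<bullet> (x0 + s *\<^sub>R e) = a+2*b* s+s^2"
                using ee by (simp add: a_def b_def inner_add_left inner_add_right inner_commute
                    power2_eq_square algebra_simps)
              thus ?thesis by (simp add: \<psi>_def algebra_simps)
            qed
            have tP: "((\<lambda>s. a+2*b* s+s^2) \<longlongrightarrow> a) (nhds 0)"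
              using tendsto_at_iff_tendsto_nhds[of "\<lambda>s. a+2*b* s+s^2" 0, symmetric]
              by (auto intro!: tendsto_eq_intros)
            have evP: "\<forall>\<^sub>F s in nhds 0. a+2*b* s+s^2 > 0" using order_tendstoD(1)[OF tP a0] .
            show "\<forall>\<^sub>F s in nhds 0. ((\<lambda>s. \<psi> (x0 + s *\<^sub>R e)) has_real_derivative h' e s) (at s)"
              using evP
            proof eventually_elim
              case (elim s)
              show ?case unfolding psil h'_def b_def[symmetric] by (rule h_deriv[OF elim])
            qed
            show "(h' e has_real_derivative h2 e) (at 0)"
              unfolding h'_def h2_def b_def[symmetric] by (rule h_deriv2[OF a0])
          qed
          have "(\<Sum>e\<in>Basis. h2 e) = 2*B*DIM('a\<times>real)"
            unfolding h2_def a_def by (rule psi_sum) (use x0nz in \<open>simp_all add: k_def n_def\<close>)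
          moreover have "2*B*real DIM('a\<times>real) = \<epsilon>" unfolding dimn B_def using n3' by simp
          ultimately have lapge: "\<epsilon> \<le> laplacian v x0" using lap by simp
          have xh: "x0 \<in> upper_half" using x0U Uh by blast
          have vp: "0 < v x0" using pos[OF xh] .
          have vle: "v x0 < \<epsilon>" using vpsi psi_le[of x0] x0n by simp
          have t1: "norm x0 powr (p*(n-2) - (n+2)) \<le> 1" by (rule powr_le1) (use tau x0n in auto)
          have t2: "v x0 powr p \<le> v x0 powr 1" by (rule powr_mono') (use pge1 vp vle eps in auto)
          have "laplacian v x0 \<le> v x0 powr p"
            using eq[OF xh] t1 by (simp add: mult_left_le_one_le)
          thus False using t2 vp vle lapge by simp
        qed
      qed
    qed
  qed
qed

end
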